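(* Let $n\ge1$, let $b_1,\dots,b_n\ge2$ be integers and $\varepsilon_1,\dots,\varepsilon_n\in\{+1,-1\}$, and let $x=[\langle b_j:\varepsilon_j\rangle_{j=1}^n]$. Then for every $z\in\mathcal{F}_n(x)$ and every $k$ with $0\le k\le n-1$, \[\frac45\cdot\frac1{b_{k+1}}\le|G^{\circ k}(z)|\le\frac43\cdot\frac1{b_{k+1}},\] and $\arg G^{\circ k}(z)\in[-\pi/4,\pi/4]$ if $\operatorname{Re}G^{\circ k}(z)>0$, while $\arg G^{\circ k}(z)\in[3\pi/4,5\pi/4]$ if $\operatorname{Re}G^{\circ k}(z)<0$.
   Context: For $x\in\mathbb{R}$, $[x]$ denotes the closest integer to $x$ with the convention $x\in([x]-1/2,[x]+1/2]$ for $x>0$, $x\in[[x]-1/2,[x]+1/2)$ for $x<0$, and $[0]=0$. Define $G(z)=-1/z-[\operatorname{Re}(-1/z)]$ for $z\in\mathbb{C}\setminus\{0\}$. For integers $b_j\ge2$ and signs $\varepsilon_j$, $[\langle b_j:\varepsilon_j\rangle_{j=1}^n]=\cfrac{\varepsilon_1}{b_1+\cfrac{\varepsilon_2}{\ddots+\cfrac{\varepsilon_n}{b_n}}}$. For an integer $b\ge2$ and $s\in\{\pm1\}$ let $D(s/b)=\{-1/w: w\in B(-sb,1/2)\}$, the open round disk (symmetric about $\mathbb{R}$) containing $s/b$, on which $G$ is a holomorphic bijection onto $B(0,1/2)$. For $x=[\langle b_j:\varepsilon_j\rangle_{j=1}^n]$ let $s_k\in\{\pm1\}$ be the sign of the real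 number $G^{\circ(k-1)}(x)$, $1\le k\le n$, and let $\mathcal{F}_n(x)$ be the set of $z$ such that for every $0\le k\le n-1$, $G^{\circ k}(z)$ is defined and lies in $D(s_{k+1}/b_{k+1})$ (the round disk of $\mathcal{F}_n$ about $x$ on which $G^{\circ n}$ maps into $B(0,1/2)$). *)

theory Defs
  imports "HOL-Analysis.Analysis"
begin

text \<open>Closest integer with the paper's convention: for x > 0, x in ([x]-1/2,[x]+1/2];
for x < 0, x in [[x]-1/2,[x]+1/2); [0] = 0.\<close>
definition nint :: "real \<Rightarrow> int" where
  "nint x = (if x > 0 then \<lceil>x - 1/2\<rceil> else if x < 0 then \<lfloor>x + 1/2\<rfloor> else 0)"

text \<open>The map G(z) = -1/z - [Re(-1/z)] (only meaningful for z ~= 0).\<close>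
definition G :: "complex \<Rightarrow> complex" where
  "G z = - 1 / z - of_int (nint (Re (- 1 / z)))"

fun cfrac :: "(int \<times> int) list \<Rightarrow> real" where
  "cfrac [] = 0"
| "cfrac ((b, e) # rest) = of_int e / (of_int b + cfrac rest)"

definition Ddisk :: "int \<Rightarrow> int \<Rightarrow> complex set" where
  "Ddisk s b = (\<lambda>w. - 1 / w) ` ball (- (of_int s * of_int b)) (1/2)"

definition cfx :: "nat \<Rightarrow> (nat \<Rightarrow> int) \<Rightarrow> (nat \<Rightarrow> int) \<Rightarrow> real" where
  "cfx n b e = cfrac (map (\<lambda>j. (b j, e j)) [1..<n+1])"

definition sgnseq :: "nat \<Rightarrow> (nat \<Rightarrow> int) \<Rightarrow> (nat \<Rightarrow> int) \<Rightarrow> nat \<Rightarrow> int" where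
  "sgnseq n b e k =
     (let y = Re ((G ^^ (k - 1)) (complex_of_real (cfx n b e)))
      in if y > 0 then 1 else if y < 0 then -1 else 0)"

definition Fn :: "nat \<Rightarrow> (nat \<Rightarrow> int) \<Rightarrow> (nat \<Rightarrow> int) \<Rightarrow> complex set" where
  "Fn n b e = {z. \<forall>k<n. (G ^^ k) z \<in> Ddisk (sgnseq n b e (k + 1)) (b (k + 1))}"

end

theory Submission
  imports Defs
begin

lemma G_real: "G (complex_of_real r) = complex_of_real (- 1 / r - of_int (nint (- 1 / r)))"
proof -
  have "- 1 / complex_of_real r = complex_of_real (-1/r)" by simp
  then show ?thesis unfolding G_def by (metis Re_complex_of_real of_real_diff of_real_of_int_eq)
qed

lemma Giter_real: "\<exists>r. (G ^^ j) (complex_of_real x) = complex_of_real r"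
proof (induction j)
  case 0 then show ?case by auto
next
  case (Suc j)
  then obtain r where "(G ^^ j) (complex_of_real x) = complex_of_real r" by blast
  then have "(G ^^ Suc j) (complex_of_real x) = complex_of_real (- 1 / r - of_int (nint (- 1 / r)))"
    using G_real by simp
  then show ?case by blast
qed

lemma arg_pos:
  assumes "Re u > 0" "\<bar>Im u\<bar> \<le> Re u"
  shows "\<exists>\<theta>. \<theta> \<in> {-pi/4..pi/4} \<and> u = rcis (cmod u) \<theta>"
proof (intro exI conjI)
  show "u = rcis (cmod u) (Arg u)" by (simp add: rcis_cmod_Arg)
  have t: "-1 \<le> Im u / Re u" "Im u / Re u \<le> 1" using assms by (auto simp: field_simps abs_le_iff)
  have "arctan (-1) \<le> arctan (Im u / Re u)" "arctan (Im u / Re u) \<le> arctan 1"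
    using t by (simp_all only: arctan_le_iff)
  then show "Arg u \<in> {-pi/4..pi/4}" unfolding arg_conv_arctan[OF assms(1)]
    by (simp only: arctan_minus arctan_one atLeastAtMost_iff) (intro conjI TrueI; linarith)
qed

lemma arg_neg:
  assumes "Re u < 0" "\<bar>Im u\<bar> \<le> - Re u"
  shows "\<exists>\<theta>. \<theta> \<in> {3*pi/4..5*pi/4} \<and> u = rcis (cmod u) \<theta>"
proof -
  obtain t where t: "t \<in> {-pi/4..pi/4}" "-u = rcis (cmod (-u)) t"
    using arg_pos[of "-u"] assms by auto
  have "u = - rcis (cmod u) t" using t(2) by (metis minus_minus norm_minus_cancel)
  also have "\<dots> = rcis (cmod u) (t + pi)" by (simp add: rcis_def cis_def complex_eq_iff)
  finally show ?thesis using t(1) by (intro exI[of _ "t+pi"]) auto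
qed

lemma disk_main:
  assumes b: "b \<ge> 2" and s: "s \<in> {1, -1}" and u: "u \<in> Ddisk s b"
  shows "4/5 * (1 / real_of_int b) \<le> cmod u
       \<and> cmod u \<le> 4/3 * (1 / real_of_int b)
       \<and> (Re u > 0 \<longrightarrow> (\<exists>\<theta>. \<theta> \<in> {-pi/4..pi/4} \<and> u = rcis (cmod u) \<theta>))
       \<and> (Re u < 0 \<longrightarrow> (\<exists>\<theta>. \<theta> \<in> {3*pi/4..5*pi/4} \<and> u = rcis (cmod u) \<theta>))"
proof -
  obtain w where w: "w \<in> ball (- (of_int s * of_int b)) (1/2)" and uw: "u = - 1 / w"
    using u unfolding Ddisk_def by auto
  define B where "B = real_of_int b"
  have B: "B \<ge> 2" using b unfolding B_def by simp
  have d: "cmod (w + complex_of_real (real_of_int s * B)) < 1/2"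
    using w by (simp add: dist_norm B_def norm_minus_commute)
  have sB: "\<bar>real_of_int s * B\<bar> = B" using s B by auto
  have "\<bar>cmod w - \<bar>real_of_int s * B\<bar>\<bar> \<le> cmod (w + complex_of_real (real_of_int s * B))"
    by (metis norm_diff_ineq norm_minus_cancel norm_of_real diff_minus_eq_add abs_le_iff norm_triangle_ineq3 minus_diff_eq)
  then have nw: "B - 1/2 < cmod w" "cmod w < B + 1/2" using d sB by auto
  have w0: "w \<noteq> 0" using nw B by auto
  have nu: "cmod u = 1 / cmod w" using uw by (simp add: norm_divide)
  have l1: "4/5 * (1/B) \<le> 1 / cmod w"
  proof -
    have "4/5*(1/B) \<le> 1/(B+1/2)" using B by (simp add: field_simps)
    also have "\<dots> \<le> 1 / cmod w" using nw B by (intro divide_left_mono) (auto intro!: mult_pos_pos)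
    finally show ?thesis .
  qed
  have l2: "1 / cmod w \<le> 4/3 * (1/B)"
  proof -
    have "1 / cmod w \<le> 1/(B - 1/2)" using nw B by (intro divide_left_mono) (auto intro!: mult_pos_pos)
    also have "\<dots> \<le> 4/3*(1/B)" using B by (simp add: field_simps)
    finally show ?thesis .
  qed
  have reim: "\<bar>Re (w + complex_of_real (real_of_int s * B))\<bar> < 1/2"
             "\<bar>Im (w + complex_of_real (real_of_int s * B))\<bar> < 1/2"
    using d abs_Re_le_cmod abs_Im_le_cmod by (meson le_less_trans)+
  have n2: "(cmod w)^2 > 0" using w0 by simp
  have uRe: "Re u = - Re w / (cmod w)^2" and uIm: "Im u = Im w / (cmod w)^2"
    using uw w0 by (simp_all add: Re_divide Im_divide cmod_power2)
  have ang: "(Re u > 0 \<longrightarrow> (\<exists>\<theta>. \<theta> \<in> {-pi/4..pi/4} \<and> u = rcis (cmod u) \<theta>))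
       \<and> (Re u < 0 \<longrightarrow> (\<exists>\<theta>. \<theta> \<in> {3*pi/4..5*pi/4} \<and> u = rcis (cmod u) \<theta>))"
  proof (cases "s = 1")
    case True
    then have a: "\<bar>Re w + B\<bar> < 1/2" "\<bar>Im w\<bar> < 1/2" using reim by auto
    have "Re w + B < 1/2" using a(1) by linarith
    then have "Re w < - 3/2" "\<bar>Im w\<bar> < 1/2" using a B by linarith+
    then have "Re u > 0" "\<bar>Im u\<bar> \<le> Re u" using n2 unfolding uRe uIm
      by (auto simp: field_simps abs_divide)
    then show ?thesis using arg_pos by auto
  next
    case False
    then have "s = -1" using s by auto
    then have a: "\<bar>Re w - B\<bar> < 1/2" "\<bar>Im w\<bar> < 1/2" using reim by auto
    have "Re w - B > -1/2" using a(1) by linarith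
    then have "Re w > 3/2" "\<bar>Im w\<bar> < 1/2" using a B by linarith+
    then have "Re u < 0" "\<bar>Im u\<bar> \<le> - Re u" using n2 unfolding uRe uIm
      by (auto simp: field_simps abs_divide)
    then show ?thesis using arg_neg by auto
  qed
  show ?thesis using l1 l2 ang nu unfolding B_def by auto
qed

theorem lemma6p4:
  fixes n :: nat and b e :: "nat \<Rightarrow> int" and z :: complex and k :: nat
  assumes "n \<ge> 1"
    and "\<And>j. j \<in> {1..n} \<Longrightarrow> b j \<ge> 2"
    and "\<And>j. j \<in> {1..n} \<Longrightarrow> e j \<in> {1, -1}"
    and "\<And>j. j < n \<Longrightarrow> (G ^^ j) (complex_of_real (cfx n b e)) \<noteq> 0"
    and "z \<in> Fn n b e"
    and "k < n"
  shows "4/5 * (1 / real_of_int (b (k+1))) \<le> cmod ((G ^^ k) z)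
       \<and> cmod ((G ^^ k) z) \<le> 4/3 * (1 / real_of_int (b (k+1)))
       \<and> (Re ((G ^^ k) z) > 0 \<longrightarrow>
            (\<exists>\<theta>. \<theta> \<in> {-pi/4..pi/4} \<and> (G ^^ k) z = rcis (cmod ((G ^^ k) z)) \<theta>))
       \<and> (Re ((G ^^ k) z) < 0 \<longrightarrow>
            (\<exists>\<theta>. \<theta> \<in> {3*pi/4..5*pi/4} \<and> (G ^^ k) z = rcis (cmod ((G ^^ k) z)) \<theta>))"
proof (rule disk_main)
  show "b (k+1) \<ge> 2" using assms(2,6) by auto
  show "(G ^^ k) z \<in> Ddisk (sgnseq n b e (k + 1)) (b (k + 1))"
    using assms(5,6) unfolding Fn_def by auto
  obtain r where r: "(G ^^ k) (complex_of_real (cfx n b e)) = complex_of_real r"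
    using Giter_real by blast
  have "r \<noteq> 0" using assms(4)[OF assms(6)] r by auto
  then show "sgnseq n b e (k + 1) \<in> {1, -1}"
    unfolding sgnseq_def Let_def using r by auto
qed

end
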